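(* No multiple zeta-star value $\zeta^{\star}(k_1,\ldots,k_r)$ (with $r\geq1$, $k_1\geq2$, $k_2,\ldots,k_r\geq1$ integers) is an integer.
   Context: $\zeta^{\star}(k_1,\ldots,k_r)=\sum_{n_1\geq n_2\geq\cdots\geq n_r\geq 1}\frac{1}{n_1^{k_1}\cdots n_r^{k_r}}$. *)

theory Defs
  imports "HOL-Analysis.Analysis"
begin

definition zeta_star_indices :: "nat \<Rightarrow> nat list set" where
  "zeta_star_indices r = {ns. length ns = r \<and> sorted_wrt (\<ge>) ns \<and> (\<forall>n\<in>set ns. n \<ge> 1)}"

definition zeta_star :: "nat list \<Rightarrow> real" where
  "zeta_star ks = (\<Sum>\<^sub>\<infinity> ns \<in> zeta_star_indices (length ks).
      \<Prod>i<length ks. 1 / real (ns ! i) ^ (ks ! i))"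

end

theory Submission imports Defs "HOL-Real_Asymp.Real_Asymp" begin

fun S :: "nat list \<Rightarrow> nat \<Rightarrow> real" where
  "S [] N = 1"
| "S (k # ks) N = (\<Sum>M=1..N. S ks M / real M ^ k)"

lemmas S_cons = S.simps(2)
declare S.simps(2)[simp del]

lemma S_nonneg: "0 \<le> S ks N"
  by (induction ks arbitrary: N) (auto simp: S_cons intro!: sum_nonneg divide_nonneg_nonneg)

lemma S_one: "S ks 1 = 1"
  by (induction ks) (auto simp: S_cons)

lemma S_one'[simp]: "S ks (Suc 0) = 1"
  using S_one by simp

lemma S_Suc: "S (k # ks) (Suc N) = S (k # ks) N + S ks (Suc N) / real (Suc N) ^ k"
  by (simp add: S_cons)

lemma S_mono: "N \<le> N' \<Longrightarrow> S ks N \<le> S ks N'"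
proof (cases ks)
  case Nil then show ?thesis by simp
next
  case (Cons k ks')
  assume "N \<le> N'"
  then show ?thesis unfolding Cons
    by (auto simp: S_cons intro!: sum_mono2 divide_nonneg_nonneg S_nonneg)
qed

lemma S_ge1: "N \<ge> 1 \<Longrightarrow> S ks N \<ge> 1"
  using S_mono[of 1 N ks] S_one by simp

lemma S_le_N: "(\<forall>x\<in>set ks. x \<ge> 1) \<Longrightarrow> S ks N \<le> max 1 (real N)"
proof (induction ks arbitrary: N)
  case Nil then show ?case by simp
next
  case (Cons k ks)
  have "S (k # ks) N \<le> (\<Sum>M=1..N. 1)"
    unfolding S.simps
  proof (rule sum_mono)
    fix M assume M: "M \<in> {1..N}"
    have pk: "\<forall>x\<in>set ks. x \<ge> 1" using Cons.prems by simp
    have "S ks M \<le> max 1 (real M)" by (rule Cons.IH[OF pk])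
    then have "S ks M \<le> real M" using M by simp
    moreover have "real M \<le> real M ^ k"
    proof -
      have "1 \<le> k" using Cons by simp
      moreover have "1 \<le> real M" using M by simp
      ultimately show ?thesis using power_increasing[of 1 k "real M"] by simp
    qed
    ultimately have "S ks M \<le> real M ^ k" by linarith
    moreover have "real M ^ k > 0" using M by simp
    ultimately show "S ks M / real M ^ k \<le> 1" by simp
  qed
  then show ?case by simp
qed


lemma S_two: "S (k # ks) 2 = 1 + S ks 2 / 2 ^ k"
proof -
  have "S (k # ks) 2 = S ks 1 / real 1 ^ k + S ks 2 / real 2 ^ k"
    by (simp add: numeral_2_eq_2 S_cons)
  then show ?thesis by (simp add: S_one)
qed

lemma S_two_bounds: "\<forall>x\<in>set ks. x \<ge> 1 \<Longrightarrow> 1 \<le> S ks 2 \<and> S ks 2 < 2"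
proof (induction ks)
  case Nil then show ?case by simp
next
  case (Cons k ks)
  then have IH: "1 \<le> S ks 2" "S ks 2 < 2" and k: "k \<ge> 1" by auto
  have "(2::real) ^ k \<ge> 2 ^ 1" using k by (intro power_increasing) auto
  then have "S ks 2 / 2 ^ k < 1" using IH by (simp add: divide_less_eq)
  moreover have "S ks 2 / 2 ^ k \<ge> 0" using IH by simp
  ultimately show ?case by (simp add: S_two)
qed

fun gt :: "nat list \<Rightarrow> nat list \<Rightarrow> bool" where
  "gt [] v = False"
| "gt (x # u) [] = True"
| "gt (x # u) (y # v) = (x < y \<or> (x = y \<and> gt u v))"

lemma gt_total: "u \<noteq> v \<Longrightarrow> gt u v \<or> gt v u"
proof (induction u arbitrary: v)
  case Nil then show ?case by (cases v) auto
next
  case (Cons x u) then show ?case by (cases v) auto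
qed

lemma sum_inv_pow_le:
  assumes that: "x < y"
  shows "(\<Sum>M=1..N. real M / real M ^ y) \<le> (\<Sum>M=1..N. 1 / real M ^ x)"
proof (rule sum_mono)
  fix M assume M: "M \<in> {1..N}"
  then have M1: "real M \<ge> 1" by simp
  have "real M ^ Suc x \<le> real M ^ y" using that M1 by (intro power_increasing) auto
  then have "real M * real M ^ x \<le> real M ^ y" by simp
  then show "real M / real M ^ y \<le> 1 / real M ^ x"
    using M1 by (simp add: divide_simps mult.commute)
qed

lemma gt_S:
  assumes "gt u v" "\<forall>x\<in>set u. x \<ge> 1" "\<forall>x\<in>set v. x \<ge> 1"
  shows "(\<forall>N\<ge>1. S v N \<le> S u N) \<and> S v 2 < S u 2"
  using assms
proof (induction u v rule: gt.induct)
  case (1 v) then show ?case by simp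
next
  case (2 x u)
  have "S u 2 / 2 ^ x > 0" using S_two_bounds[of u] 2 by auto
  then show ?case using S_ge1[of _ "x # u"] by (auto simp: S_two)
next
  case (3 x u y v)
  show ?case
  proof (cases "x < y")
    case True
    have A: "S (y # v) N \<le> S (x # u) N" if N: "N \<ge> 1" for N
    proof -
      have "S (y # v) N \<le> (\<Sum>M=1..N. real M / real M ^ y)"
        unfolding S.simps
      proof (rule sum_mono)
        fix M assume M: "M \<in> {1..N}"
        have "S v M \<le> max 1 (real M)" using S_le_N 3 by simp
        then have "S v M \<le> real M" using M by simp
        then show "S v M / real M ^ y \<le> real M / real M ^ y"
          by (intro divide_right_mono) auto
      qed
      also have "\<dots> \<le> (\<Sum>M=1..N. 1 / real M ^ x)"
        using True 3 by (intro sum_inv_pow_le) auto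
      also have "\<dots> \<le> S (x # u) N"
        unfolding S.simps
      proof (rule sum_mono)
        fix M assume M: "M \<in> {1..N}"
        have "1 \<le> S u M" using M S_ge1 by simp
        then show "1 / real M ^ x \<le> S u M / real M ^ x"
          by (intro divide_right_mono) auto
      qed
      finally show ?thesis .
    qed
    have B: "S (y # v) 2 < S (x # u) 2"
    proof -
      have v2: "S v 2 < 2" and u2: "S u 2 \<ge> 1" using S_two_bounds 3 by auto
      have "(2::real) ^ Suc x \<le> 2 ^ y" using True by (intro power_increasing) auto
      then have p: "2 * 2 ^ x \<le> (2::real) ^ y" by simp
      have "S v 2 / 2 ^ y < 2 / 2 ^ y" using v2 by (simp add: divide_strict_right_mono)
      also have "\<dots> \<le> 1 / 2 ^ x" using p by (simp add: divide_simps)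
      also have "\<dots> \<le> S u 2 / 2 ^ x" using u2 by (simp add: divide_right_mono)
      finally show ?thesis by (simp add: S_two)
    qed
    show ?thesis using A B by auto
  next
    case False
    then have xy: "x = y" and g: "gt u v" using 3 by auto
    have IH: "(\<forall>N\<ge>1. S v N \<le> S u N) \<and> S v 2 < S u 2" using 3 xy g by auto
    have A: "S (y # v) N \<le> S (x # u) N" if N: "N \<ge> 1" for N
      unfolding S.simps xy
      by (rule sum_mono, rule divide_right_mono) (use IH in auto)
    have B: "S (y # v) 2 < S (x # u) 2"
      using IH xy by (simp add: S_two divide_strict_right_mono)
    show ?thesis using A B by auto
  qed
qed


lemma harm_le_ln: "N \<ge> 1 \<Longrightarrow> (harm N :: real) \<le> 1 + ln (real N)"
proof -
  assume N: "N \<ge> 1"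
  then obtain n where n: "N = Suc n" by (cases N) auto
  have "harm (Suc n) - ln (real (Suc n)) \<le> harm (Suc 0) - ln (real (Suc 0))"
    using decseq_harm_diff_ln unfolding decseq_def by blast
  then show ?thesis using n by (simp add: harm_def)
qed

lemma S_le_harm: "\<forall>x\<in>set ks. x \<ge> 1 \<Longrightarrow> N \<ge> 1 \<Longrightarrow> S ks N \<le> harm N ^ length ks"
proof (induction ks arbitrary: N)
  case Nil then show ?case by simp
next
  case (Cons k ks)
  have pk: "\<forall>x\<in>set ks. x \<ge> 1" and k: "k \<ge> 1" using Cons.prems by auto
  have "S (k # ks) N \<le> (\<Sum>M=1..N. harm N ^ length ks * (1 / real M))"
    unfolding S_cons
  proof (rule sum_mono)
    fix M assume M: "M \<in> {1..N}"
    have "S ks M \<le> harm M ^ length ks" using Cons.IH[OF pk] M by simp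
    also have "\<dots> \<le> harm N ^ length ks"
      using M by (intro power_mono harm_mono harm_nonneg) auto
    finally have a: "S ks M \<le> harm N ^ length ks" .
    have "real M ^ 1 \<le> real M ^ k" using M k by (intro power_increasing) auto
    then have b: "1 / real M ^ k \<le> 1 / real M" using M by (intro divide_left_mono) auto
    have "S ks M / real M ^ k = S ks M * (1 / real M ^ k)" by simp
    also have "\<dots> \<le> harm N ^ length ks * (1 / real M)"
      using a b S_nonneg[of ks M] M by (intro mult_mono) auto
    finally show "S ks M / real M ^ k \<le> harm N ^ length ks * (1 / real M)" .
  qed
  also have "\<dots> = harm N ^ length ks * harm N"
    by (simp add: harm_def sum_distrib_left divide_inverse)
  finally show ?case by (simp add: mult.commute)
qed

lemma S_over_N:
  assumes "\<forall>x\<in>set ks. x \<ge> 1"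
  shows "(\<lambda>N. S ks N / real N) \<longlonglongrightarrow> 0"
proof -
  define l where "l = length ks"
  define s :: real where "s = 1 / real (Suc l)"
  have s: "s > 0" unfolding s_def by simp
  have "(\<lambda>N. ln (real N) / real N powr s) \<longlonglongrightarrow> 0" by (rule lim_ln_over_power[OF s])
  moreover have "(\<lambda>N. 1 / real N powr s) \<longlonglongrightarrow> 0"
    using s by real_asymp
  ultimately have "(\<lambda>N. ln (real N) / real N powr s + 1 / real N powr s) \<longlonglongrightarrow> 0"
    using tendsto_add by fastforce
  then have "(\<lambda>N. (1 + ln (real N)) / real N powr s) \<longlonglongrightarrow> 0"
    by (simp add: add_divide_distrib add.commute)
  then have T: "(\<lambda>N. ((1 + ln (real N)) / real N powr s) ^ Suc l) \<longlonglongrightarrow> 0"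
    using tendsto_power[of _ 0 sequentially "Suc l"] by fastforce
  show ?thesis
  proof (rule tendsto_sandwich[OF _ _ tendsto_const T])
    show "\<forall>\<^sub>F N in sequentially. 0 \<le> S ks N / real N"
      by (intro always_eventually allI divide_nonneg_nonneg S_nonneg) auto
    show "\<forall>\<^sub>F N in sequentially. S ks N / real N \<le> ((1 + ln (real N)) / real N powr s) ^ Suc l"
      using eventually_ge_at_top[of 1]
    proof eventually_elim
      case (elim N)
      then have N: "real N \<ge> 1" by simp
      have lnN: "0 \<le> ln (real N)" using N by simp
      have "S ks N \<le> harm N ^ l" using S_le_harm[OF assms elim] l_def by simp
      also have "\<dots> \<le> (1 + ln (real N)) ^ l"
        using harm_le_ln[OF elim] by (intro power_mono harm_nonneg) auto
      also have "\<dots> \<le> (1 + ln (real N)) ^ Suc l"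
        using lnN by (intro power_increasing) auto
      finally have a: "S ks N \<le> (1 + ln (real N)) ^ Suc l" .
      have "(real N powr s) ^ Suc l = real N powr (s * real (Suc l))"
        using N by (subst powr_realpow[symmetric]) (auto simp: powr_powr)
      also have "\<dots> = real N" using N by (simp add: s_def)
      finally have b: "(real N powr s) ^ Suc l = real N" .
      have "((1 + ln (real N)) / real N powr s) ^ Suc l = (1 + ln (real N)) ^ Suc l / real N"
        by (simp only: power_divide b)
      then show ?case using a N by (simp add: divide_right_mono)
    qed
  qed
qed


definition Iset :: "nat \<Rightarrow> nat \<Rightarrow> nat list set" where
  "Iset r N = {ns. length ns = r \<and> sorted_wrt (\<ge>) ns \<and> (\<forall>n\<in>set ns. 1 \<le> n \<and> n \<le> N)}"

definition P :: "nat list \<Rightarrow> nat list \<Rightarrow> real" where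
  "P ks ns = (\<Prod>i<length ks. 1 / real (ns ! i) ^ (ks ! i))"

lemma Iset_finite: "finite (Iset r N)"
proof -
  have "Iset r N \<subseteq> {xs. set xs \<subseteq> {1..N} \<and> length xs = r}"
    unfolding Iset_def by auto
  moreover have "finite {xs. set xs \<subseteq> {1..N} \<and> length xs = r}"
    by (rule finite_lists_length_eq) simp
  ultimately show ?thesis by (rule finite_subset)
qed

lemma Iset_zero: "Iset 0 N = {[]}"
  unfolding Iset_def by auto

lemma Iset_Suc: "Iset (Suc r) N = (\<lambda>(M, ns). M # ns) ` (SIGMA M:{1..N}. Iset r M)"
proof (intro equalityI subsetI)
  fix xs assume xs: "xs \<in> Iset (Suc r) N"
  then obtain M ns where xs_eq: "xs = M # ns" unfolding Iset_def by (cases xs) auto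
  have "M \<in> {1..N}" "ns \<in> Iset r M" using xs unfolding xs_eq Iset_def by auto
  then show "xs \<in> (\<lambda>(M, ns). M # ns) ` (SIGMA M:{1..N}. Iset r M)"
    unfolding xs_eq by force
next
  fix xs assume "xs \<in> (\<lambda>(M, ns). M # ns) ` (SIGMA M:{1..N}. Iset r M)"
  then obtain M ns where xs_eq: "xs = M # ns" and M: "M \<in> {1..N}" and ns: "ns \<in> Iset r M"
    by auto
  show "xs \<in> Iset (Suc r) N" using M ns unfolding xs_eq Iset_def by auto
qed

lemma P_cons: "P (k # ks) (M # ns) = 1 / real M ^ k * P ks ns"
  unfolding P_def length_Cons by (subst prod.lessThan_Suc_shift) simp

lemma sum_P: "(\<Sum>ns\<in>Iset (length ks) N. P ks ns) = S ks N"
proof (induction ks arbitrary: N)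
  case Nil then show ?case by (simp add: Iset_zero P_def)
next
  case (Cons k ks)
  have inj: "inj_on (\<lambda>(M, ns). M # ns) (SIGMA M:{1..N}. Iset (length ks) M)"
    by (auto simp: inj_on_def)
  have "(\<Sum>ns\<in>Iset (length (k # ks)) N. P (k # ks) ns)
      = (\<Sum>x\<in>(SIGMA M:{1..N}. Iset (length ks) M). P (k # ks) (case x of (M, ns) \<Rightarrow> M # ns))"
    by (simp only: length_Cons Iset_Suc sum.reindex[OF inj] o_def)
  also have "\<dots> = (\<Sum>M\<in>{1..N}. \<Sum>ns\<in>Iset (length ks) M. P (k # ks) (M # ns))"
    by (subst sum.Sigma) (auto simp: Iset_finite intro!: sum.cong split: prod.split)
  also have "\<dots> = (\<Sum>M\<in>{1..N}. 1 / real M ^ k * S ks M)"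
    by (simp add: P_cons sum_distrib_left[symmetric] Cons.IH del: times_divide_eq_left times_divide_eq_right div_mult_self1 mult_1)
  also have "\<dots> = S (k # ks) N" by (simp add: S_cons)
  finally show ?case .
qed

lemma zs_bounds:
  assumes bound: "\<And>N. S ks N \<le> c"
  shows "(\<forall>N. S ks N \<le> zeta_star ks) \<and> zeta_star ks \<le> c"
proof -
  define A where "A = zeta_star_indices (length ks)"
  have zs: "zeta_star ks = infsum (P ks) A" unfolding zeta_star_def A_def P_def by simp
  have nonneg: "0 \<le> P ks ns" for ns unfolding P_def by (auto intro!: prod_nonneg)
  have IA: "Iset (length ks) N \<subseteq> A" for N unfolding Iset_def A_def zeta_star_indices_def by auto
  have fin: "sum (P ks) F \<le> c" if F: "finite F" "F \<subseteq> A" for F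
  proof -
    define N where "N = Max (insert 0 (\<Union>ns\<in>F. set ns))"
    have "F \<subseteq> Iset (length ks) N"
    proof
      fix ns assume ns: "ns \<in> F"
      have "n \<le> N" if "n \<in> set ns" for n
        unfolding N_def using F ns that by (intro Max_ge) auto
      then show "ns \<in> Iset (length ks) N"
        using F ns unfolding Iset_def A_def zeta_star_indices_def by auto
    qed
    then have "sum (P ks) F \<le> sum (P ks) (Iset (length ks) N)"
      by (intro sum_mono2 Iset_finite nonneg)
    also have "\<dots> = S ks N" by (rule sum_P)
    finally show ?thesis using bound[of N] by simp
  qed
  have summ: "P ks summable_on A"
  proof (rule nonneg_bdd_above_summable_on)
    show "bdd_above (sum (P ks) ` {F. F \<subseteq> A \<and> finite F})"
      using fin by (auto intro!: bdd_aboveI)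
  qed (use nonneg in auto)
  have "zeta_star ks \<le> c" unfolding zs using summ fin by (intro infsum_le_finite_sums) auto
  moreover have "S ks N \<le> zeta_star ks" for N
  proof -
    have "S ks N = sum (P ks) (Iset (length ks) N)" by (simp add: sum_P)
    also have "\<dots> \<le> infsum (P ks) A"
      using summ IA nonneg by (intro finite_sum_le_infsum Iset_finite) auto
    finally show ?thesis unfolding zs .
  qed
  ultimately show ?thesis by blast
qed


definition Q :: "nat list \<Rightarrow> nat \<Rightarrow> nat \<Rightarrow> real" where
  "Q u b N = (\<Sum>i<b. S (drop i u) N)"

definition E :: "nat list \<Rightarrow> nat \<Rightarrow> nat \<Rightarrow> real" where
  "E u b N = S (2 # u) N + (S (2 # u) N + Q u b N) / real N"

definition D :: "nat list \<Rightarrow> nat \<Rightarrow> nat \<Rightarrow> real" where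
  "D u b N = (real (Suc N) * real N) * (E u b (Suc N) - E u b N)"

lemma E_one: "E u b 1 = real b + 2"
  unfolding E_def Q_def by (simp add: S_one)

lemma alg_step:
  fixes A A' Q Q' U n :: real
  assumes n: "n \<ge> 1" and A': "A' = A + U / (1 + n) ^ 2"
  shows "(1 + n) * n * ((A' + (A' + Q') / (1 + n)) - (A + (A + Q) / n))
         = U - A' + ((1 + n) * (Q' - Q) - Q')"
proof -
  have n0: "n \<noteq> 0" "1 + n \<noteq> 0" using n by auto
  have e1: "(1 + n) * n * ((A' + Q') / (1 + n)) = n * (A' + Q')" using n0 by (simp add: field_simps)
  have e2: "(1 + n) * n * ((A + Q) / n) = (1 + n) * (A + Q)" using n0 by (simp add: field_simps)
  have U: "U = (A' - A) * (1 + n) ^ 2" using A' n0 by (simp add: field_simps)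
  have "(1 + n) * n * ((A' + (A' + Q') / (1 + n)) - (A + (A + Q) / n))
      = (1 + n) * n * (A' - A) + (1 + n) * n * ((A' + Q') / (1 + n)) - (1 + n) * n * ((A + Q) / n)"
    by (simp add: right_diff_distrib distrib_left)
  also have "\<dots> = (1 + n) * n * (A' - A) + n * (A' + Q') - (1 + n) * (A + Q)" by (simp only: e1 e2)
  also have "\<dots> = U - A' + ((1 + n) * (Q' - Q) - Q')" unfolding U by (simp add: power2_eq_square algebra_simps)
  finally show ?thesis .
qed

lemma D_formula:
  assumes N: "N \<ge> 1"
  shows "D u b N = S u (Suc N) - S (2 # u) (Suc N)
     + (\<Sum>i<b. real (Suc N) * (S (drop i u) (Suc N) - S (drop i u) N) - S (drop i u) (Suc N))"
proof -
  have A': "S (2 # u) (Suc N) = S (2 # u) N + S u (Suc N) / (1 + real N) ^ 2"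
    by (simp add: S_Suc)
  have key: "(1 + real N) * real N * ((S (2 # u) (Suc N) + (S (2 # u) (Suc N) + Q u b (Suc N)) / (1 + real N))
       - (S (2 # u) N + (S (2 # u) N + Q u b N) / real N))
     = S u (Suc N) - S (2 # u) (Suc N) + ((1 + real N) * (Q u b (Suc N) - Q u b N) - Q u b (Suc N))"
    by (rule alg_step) (use N A' in auto)
  have "D u b N = S u (Suc N) - S (2 # u) (Suc N) + ((1 + real N) * (Q u b (Suc N) - Q u b N) - Q u b (Suc N))"
    unfolding D_def E_def of_nat_Suc by (rule key)
  also have "(1 + real N) * (Q u b (Suc N) - Q u b N) - Q u b (Suc N)
     = (\<Sum>i<b. real (Suc N) * (S (drop i u) (Suc N) - S (drop i u) N) - S (drop i u) (Suc N))"
    unfolding Q_def by (simp add: sum_subtractf sum_distrib_left sum.distrib algebra_simps)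
  finally show ?thesis .
qed

lemma tele:
  assumes N: "N \<ge> 1"
  shows "(\<Sum>i<a. real (Suc N) * (S (drop i (replicate a 1 @ x)) (Suc N) - S (drop i (replicate a 1 @ x)) N)
            - S (drop i (replicate a 1 @ x)) (Suc N)) = S x (Suc N) - S (replicate a 1 @ x) (Suc N)"
proof (induction a)
  case 0 then show ?case by simp
next
  case (Suc a)
  define v where "v = replicate a 1 @ x"
  have u: "replicate (Suc a) 1 @ x = 1 # v" unfolding v_def by simp
  have h: "real (Suc N) * (S (1 # v) (Suc N) - S (1 # v) N) = S v (Suc N)"
    by (simp add: S_Suc)
  have IH: "(\<Sum>i<a. real (Suc N) * (S (drop i v) (Suc N) - S (drop i v) N) - S (drop i v) (Suc N))
     = S x (Suc N) - S v (Suc N)" using Suc.IH unfolding v_def .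
  show ?case unfolding u
    by (simp only: sum.lessThan_Suc_shift drop_0 drop_Suc_Cons h IH)
qed


lemma D_shape1:
  assumes N: "N \<ge> 1"
  shows "D (replicate b 1 @ x) b N = S x (Suc N) - S (2 # replicate b 1 @ x) (Suc N)"
  using D_formula[OF N, of "replicate b 1 @ x" b] tele[OF N, of b x] by simp

lemma D_shape2:
  assumes N: "N \<ge> 1"
  shows "D (replicate a 1 @ x) (Suc a) N
     = real (Suc N) * (S x (Suc N) - S x N) - S (2 # replicate a 1 @ x) (Suc N)"
proof -
  have dr: "drop a (replicate a 1 @ x) = x" by simp
  show ?thesis
    using D_formula[OF N, of "replicate a 1 @ x" "Suc a"] tele[OF N, of a x]
    by (simp only: sum.lessThan_Suc dr)
qed

lemma E_g:
  "E u b N = S (2 # u) N + (S (2 # u) N / real N + (\<Sum>i<b. S (drop i u) N / real N))"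
  unfolding E_def Q_def by (simp add: add_divide_distrib sum_divide_distrib)

lemma E_chain:
  assumes step: "\<And>N. N \<ge> 1 \<Longrightarrow> E u b N \<le> E u b (Suc N)"
  shows "N \<ge> 2 \<Longrightarrow> E u b 2 \<le> E u b N"
proof (induction N rule: dec_induct)
  case base then show ?case by simp
next
  case (step n) then show ?case using assms[of n] by simp
qed

lemma E_chain':
  assumes step: "\<And>N. N \<ge> 1 \<Longrightarrow> E u b (Suc N) \<le> E u b N"
  shows "N \<ge> 2 \<Longrightarrow> E u b N \<le> E u b 2"
proof (induction N rule: dec_induct)
  case base then show ?case by simp
next
  case (step n) then show ?case using assms[of n] by simp
qed

lemma D_sign:
  assumes "N \<ge> 1"
  shows "(0 \<le> D u b N \<longleftrightarrow> E u b N \<le> E u b (Suc N)) \<and> (D u b N \<le> 0 \<longleftrightarrow> E u b (Suc N) \<le> E u b N)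
       \<and> (0 < D u b N \<longleftrightarrow> E u b N < E u b (Suc N)) \<and> (D u b N < 0 \<longleftrightarrow> E u b (Suc N) < E u b N)"
proof -
  have p: "real (Suc N) * real N > 0" using assms by simp
  show ?thesis unfolding D_def using p
    by (simp add: zero_le_mult_iff mult_le_0_iff zero_less_mult_iff mult_less_0_iff)
qed

lemma E_lower:
  assumes pos: "\<forall>x\<in>set u. x \<ge> 1"
    and bound: "\<And>N. S (2 # u) N \<le> c"
    and Dnn: "\<And>N. N \<ge> 1 \<Longrightarrow> 0 \<le> D u b N"
    and D1: "0 < D u b 1"
  shows "zeta_star (2 # u) > real b + 2"
proof -
  have zs: "\<forall>N. S (2 # u) N \<le> zeta_star (2 # u)" using zs_bounds[OF bound] by blast
  have step: "E u b N \<le> E u b (Suc N)" if "N \<ge> 1" for N using D_sign[OF that] Dnn[OF that] by blast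
  have E2: "E u b 1 < E u b 2" using D_sign[of 1 u b] D1 by (simp add: numeral_2_eq_2)
  define g where "g N = S (2 # u) N / real N + (\<Sum>i<b. S (drop i u) N / real N)" for N
  have pos2: "\<forall>x\<in>set (2 # u). x \<ge> 1" using pos by simp
  have posd: "\<forall>x\<in>set (drop i u). x \<ge> 1" for i using pos by (meson in_set_dropD)
  have g0: "g \<longlonglongrightarrow> 0"
  proof -
    have "(\<lambda>N. S (2 # u) N / real N + (\<Sum>i<b. S (drop i u) N / real N)) \<longlonglongrightarrow> 0 + (\<Sum>i<b. 0)"
      by (intro tendsto_add tendsto_sum S_over_N pos2 posd)
    then show ?thesis unfolding g_def by simp
  qed
  have lim: "(\<lambda>N. E u b 2 - g N) \<longlonglongrightarrow> E u b 2 - 0"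
    by (intro tendsto_diff tendsto_const g0)
  have ev: "\<forall>n\<ge>2. E u b 2 - g n \<le> zeta_star (2 # u)"
  proof (intro allI impI)
    fix n :: nat assume n: "n \<ge> 2"
    have "E u b 2 \<le> E u b n" by (rule E_chain[OF step n]) auto
    then have "E u b 2 - g n \<le> S (2 # u) n" unfolding g_def E_g by simp
    then show "E u b 2 - g n \<le> zeta_star (2 # u)" using zs by (meson order_trans)
  qed
  have "E u b 2 \<le> zeta_star (2 # u)"
    using LIMSEQ_le_const2[OF lim] ev by auto
  then show ?thesis using E2 E_one[of u b] by simp
qed

lemma E_upper:
  assumes pos: "\<forall>x\<in>set u. x \<ge> 1"
    and Dnp: "\<And>N. N \<ge> 1 \<Longrightarrow> D u b N \<le> 0"
    and D1: "D u b 1 < 0"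
  shows "zeta_star (2 # u) < real b + 2 \<and> (\<forall>N. S (2 # u) N \<le> real b + 2)"
proof -
  have step: "E u b (Suc N) \<le> E u b N" if "N \<ge> 1" for N using D_sign[OF that] Dnp[OF that] by blast
  have E2: "E u b 2 < E u b 1" using D_sign[of 1 u b] D1 by (simp add: numeral_2_eq_2)
  have Qnn: "0 \<le> Q u b N" for N unfolding Q_def by (intro sum_nonneg) (simp add: S_nonneg)
  have SE: "S (2 # u) N \<le> E u b N" for N
    unfolding E_def using Qnn[of N] S_nonneg[of "2 # u" N] by (simp add: divide_nonneg_nonneg)
  have bnd: "S (2 # u) N \<le> E u b 2" for N
  proof (cases "N \<ge> 2")
    case True
    then show ?thesis using SE[of N] E_chain'[OF step True] by simp
  next
    case False
    then have "S (2 # u) N \<le> S (2 # u) 2" by (intro S_mono) simp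
    then show ?thesis using SE[of 2] by simp
  qed
  have "zeta_star (2 # u) \<le> E u b 2" using zs_bounds[OF bnd] by blast
  then show ?thesis using E2 E_one[of u b] bnd by (smt (verit))
qed


lemma not_int_between:
  fixes z :: real
  assumes "real m < z" "z < real m + 1"
  shows "z \<notin> \<int>"
proof
  assume "z \<in> \<int>"
  then obtain n where n: "z = of_int n" by (auto elim: Ints_cases)
  then have "int m < n" "n < int m + 1" using assms by linarith+
  then show False by linarith
qed

lemma S2_bound: "N \<ge> 2 \<Longrightarrow> S [2] N \<le> 7 / 4 - 1 / real N"
proof (induction N rule: dec_induct)
  case base
  have "S [2] 2 = 5 / 4" by (simp add: S_two)
  then show ?case by simp
next
  case (step n)
  have n: "real n \<ge> 2" using step by simp
  have "S [2] (Suc n) = S [2] n + 1 / (real n + 1) ^ 2" by (simp add: S_Suc)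
  also have "\<dots> \<le> 7 / 4 - 1 / real n + 1 / (real n + 1) ^ 2" using step by simp
  also have "\<dots> \<le> 7 / 4 - 1 / real (Suc n)"
  proof -
    have e: "1 / real n - 1 / (real n + 1) = 1 / (real n * (real n + 1))"
      using n by (simp add: field_simps)
    have "real n * (real n + 1) \<le> (real n + 1) ^ 2" by (simp add: power2_eq_square)
    then have "1 / (real n + 1) ^ 2 \<le> 1 / (real n * (real n + 1))"
      using n by (intro divide_left_mono) auto
    then have "1 / (real n + 1) ^ 2 \<le> 1 / real n - 1 / (real n + 1)" using e by simp
    moreover have "1 / real (Suc n) = 1 / (real n + 1)" by simp
    ultimately show ?thesis by linarith
  qed
  finally show ?case .
qed

lemma S_2cons_gt1: "S (2 # u) 2 > 1"
proof -
  have "S u 2 \<ge> 1" using S_ge1 by simp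
  then show ?thesis by (simp add: S_two)
qed

lemma case_ge3:
  assumes k: "k \<ge> 3" and pos: "\<forall>x\<in>set w. x \<ge> 1"
  shows "zeta_star (k # w) \<notin> \<int>"
proof -
  have g: "gt [2] (k # w)" using k by simp
  have cmp: "\<forall>N\<ge>1. S (k # w) N \<le> S [2] N" using gt_S[OF g] pos k by auto
  have bnd: "S (k # w) N \<le> 7 / 4" for N
  proof (cases "N \<ge> 2")
    case True
    then show ?thesis using cmp S2_bound[OF True] by (smt (verit) of_nat_0_le_iff divide_nonneg_nonneg zero_le_one le_trans one_le_numeral)
  next
    case False
    then have "S (k # w) N \<le> S (k # w) 1" by (intro S_mono) simp
    then show ?thesis by (simp add: S_one)
  qed
  have zs: "(\<forall>N. S (k # w) N \<le> zeta_star (k # w)) \<and> zeta_star (k # w) \<le> 7 / 4"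
    by (rule zs_bounds[OF bnd])
  have "S (k # w) 2 > 1"
  proof -
    have "S w 2 \<ge> 1" using S_ge1 by simp
    then show ?thesis by (simp add: S_two)
  qed
  then have "zeta_star (k # w) > real 1" using zs by (metis of_nat_1 order_less_le_trans)
  moreover have "zeta_star (k # w) < real 1 + 1" using zs by simp
  ultimately show ?thesis by (rule not_int_between)
qed


lemma Ddiff_le:
  assumes pos: "\<forall>x\<in>set rest. x \<ge> 1" and r: "rest = [] \<or> hd rest \<noteq> 1" and N: "N \<ge> 1"
  shows "real (Suc N) * (S rest (Suc N) - S rest N) \<le> 1"
proof (cases rest)
  case Nil then show ?thesis by simp
next
  case (Cons x w)
  then have x: "x \<ge> 2" and pw: "\<forall>y\<in>set w. y \<ge> 1" using pos r by auto
  define M where "M = real (Suc N)"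
  have M1: "M \<ge> 1" unfolding M_def by simp
  have "S w (Suc N) \<le> max 1 (real (Suc N))" by (rule S_le_N[OF pw])
  then have Sw: "S w (Suc N) \<le> M" unfolding M_def by simp
  have "M ^ 2 \<le> M ^ x" using x M1 by (intro power_increasing) auto
  have "M * (S rest (Suc N) - S rest N) = M * (S w (Suc N) / M ^ x)"
    unfolding Cons M_def by (simp add: S_Suc)
  also have "\<dots> \<le> M * (M / M ^ 2)"
  proof -
    have "S w (Suc N) / M ^ x \<le> M / M ^ x" using Sw M1 by (intro divide_right_mono) auto
    also have "\<dots> \<le> M / M ^ 2" using \<open>M ^ 2 \<le> M ^ x\<close> M1 by (intro divide_left_mono) auto
    finally show ?thesis using M1 by (intro mult_left_mono) auto
  qed
  also have "\<dots> = 1" using M1 by (simp add: power2_eq_square)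
  finally show ?thesis unfolding M_def .
qed

lemma case_2:
  assumes pos: "\<forall>x\<in>set u. x \<ge> 1"
  shows "zeta_star (2 # u) \<notin> \<int>"
proof -
  define a where "a = length (takeWhile (\<lambda>x. x = 1) u)"
  define rest where "rest = dropWhile (\<lambda>x. x = 1) u"
  have tw: "takeWhile (\<lambda>x. x = 1) u = replicate a 1"
    unfolding a_def by (rule replicate_length_same[symmetric]) (auto dest: set_takeWhileD)
  have u: "u = replicate a 1 @ rest"
    unfolding rest_def using takeWhile_dropWhile_id[of "\<lambda>x. x = 1" u] tw by metis
  have r: "rest = [] \<or> hd rest \<noteq> 1"
    unfolding rest_def using hd_dropWhile[of "\<lambda>x. x = 1" u] by auto
  have prest: "\<forall>x\<in>set rest. x \<ge> 1" using pos u by auto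
  define ks where "ks = 2 # replicate a 1 @ rest"
  have ks: "2 # u = ks" unfolding ks_def u by simp
  have pks: "\<forall>x\<in>set ks. x \<ge> 1" using pos ks by auto
  have pu: "\<forall>x\<in>set (replicate a 1 @ rest). x \<ge> 1" using pos u by simp
  have neq: "rest \<noteq> ks" unfolding ks_def by (metis impossible_Cons le_add2 length_append)
  have S2: "S ks 2 > 1" unfolding ks_def by (rule S_2cons_gt1)
  have "real (Suc a) + 2 = real (a + 2) + 1" by simp
  have UA: "zeta_star ks < real (a + 2) + 1 \<and> (\<forall>N. S ks N \<le> real (Suc a) + 2)"
  proof -
    have "zeta_star (2 # (replicate a 1 @ rest)) < real (Suc a) + 2 \<and>
          (\<forall>N. S (2 # (replicate a 1 @ rest)) N \<le> real (Suc a) + 2)"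
    proof (rule E_upper[OF pu])
      fix N :: nat assume N: "N \<ge> 1"
      have "S ks (Suc N) \<ge> 1" using S_ge1 by simp
      then show "D (replicate a 1 @ rest) (Suc a) N \<le> 0"
        using D_shape2[OF N, of a rest] Ddiff_le[OF prest r N] unfolding ks_def by simp
    next
      have "D (replicate a 1 @ rest) (Suc a) 1 = real 2 * (S rest 2 - S rest 1) - S ks 2"
        using D_shape2[of 1 a rest] unfolding ks_def by (simp add: numeral_2_eq_2)
      then show "D (replicate a 1 @ rest) (Suc a) 1 < 0"
        using Ddiff_le[OF prest r, of 1] S2 by (simp add: numeral_2_eq_2)
    qed
    then show ?thesis unfolding ks_def by simp
  qed
  have bnd: "\<And>N. S ks N \<le> real (Suc a) + 2" using UA by blast
  consider (A) "gt rest ks" | (B) "gt ks rest" using gt_total[OF neq] by blast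
  then show ?thesis
  proof cases
    case A
    have cmp: "\<forall>N\<ge>1. S ks N \<le> S rest N" "S ks 2 < S rest 2" using gt_S[OF A prest pks] by auto
    have "zeta_star (2 # (replicate a 1 @ rest)) > real a + 2"
    proof (rule E_lower[OF pu])
      show "\<And>N. S (2 # replicate a 1 @ rest) N \<le> real (Suc a) + 2" using bnd unfolding ks_def .
    next
      fix N :: nat assume N: "N \<ge> 1"
      show "0 \<le> D (replicate a 1 @ rest) a N"
        using D_shape1[OF N, of a rest] cmp(1) unfolding ks_def by simp
    next
      show "0 < D (replicate a 1 @ rest) a 1"
        using D_shape1[of 1 a rest] cmp(2) unfolding ks_def by (simp add: numeral_2_eq_2)
    qed
    then have "real (a + 2) < zeta_star ks" unfolding ks_def by simp
    then show ?thesis using UA ks by (metis not_int_between)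
  next
    case B
    have cmp: "\<forall>N\<ge>1. S rest N \<le> S ks N" "S rest 2 < S ks 2" using gt_S[OF B pks prest] by auto
    have up: "zeta_star ks < real a + 2"
    proof -
      have "zeta_star (2 # (replicate a 1 @ rest)) < real a + 2 \<and>
            (\<forall>N. S (2 # (replicate a 1 @ rest)) N \<le> real a + 2)"
      proof (rule E_upper[OF pu])
        fix N :: nat assume N: "N \<ge> 1"
        show "D (replicate a 1 @ rest) a N \<le> 0"
          using D_shape1[OF N, of a rest] cmp(1) unfolding ks_def by simp
      next
        show "D (replicate a 1 @ rest) a 1 < 0"
          using D_shape1[of 1 a rest] cmp(2) unfolding ks_def by (simp add: numeral_2_eq_2)
      qed
      then show ?thesis unfolding ks_def by simp
    qed
    have lo: "zeta_star ks > real (a + 1)"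
    proof (cases a)
      case 0
      have "S ks 2 \<le> zeta_star ks" using zs_bounds[OF bnd] by blast
      then show ?thesis using S2 0 by simp
    next
      case (Suc a')
      have ks': "ks = 2 # replicate a' 1 @ (1 # rest)" unfolding ks_def Suc
        by (simp add: replicate_app_Cons_same)
      have pu': "\<forall>x\<in>set (replicate a' 1 @ (1 # rest)). x \<ge> 1" using prest by (auto simp: set_replicate_conv_if)
      have g: "gt (1 # rest) ks" unfolding ks_def by simp
      have p1: "\<forall>x\<in>set (1 # rest). x \<ge> 1" using prest by simp
      have cmp': "\<forall>N\<ge>1. S ks N \<le> S (1 # rest) N" "S ks 2 < S (1 # rest) 2"
        using gt_S[OF g p1 pks] by auto
      have "zeta_star (2 # (replicate a' 1 @ (1 # rest))) > real a' + 2"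
      proof (rule E_lower[OF pu'])
        show "\<And>N. S (2 # replicate a' 1 @ (1 # rest)) N \<le> real (Suc a) + 2" using bnd unfolding ks' .
      next
        fix N :: nat assume N: "N \<ge> 1"
        show "0 \<le> D (replicate a' 1 @ (1 # rest)) a' N"
          using D_shape1[OF N, of a' "1 # rest"] cmp'(1) unfolding ks' by simp
      next
        show "0 < D (replicate a' 1 @ (1 # rest)) a' 1"
          using D_shape1[of 1 a' "1 # rest"] cmp'(2) unfolding ks' by (simp add: numeral_2_eq_2)
      qed
      then show ?thesis unfolding ks' Suc by simp
    qed
    have "real (a + 1) + 1 = real a + 2" by simp
    then show ?thesis using up lo ks by (metis not_int_between)
  qed
qed


theorem theorem1p8:
  fixes ks :: "nat list"
  assumes "length ks \<ge> 1"
    and "ks ! 0 \<ge> 2"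
    and "\<forall>i. 1 \<le> i \<and> i < length ks \<longrightarrow> ks ! i \<ge> 1"
  shows "zeta_star ks \<notin> \<int>"
proof -
  obtain k w where ks: "ks = k # w" using assms(1) by (cases ks) auto
  have k: "k \<ge> 2" using assms(2) ks by simp
  have pw: "\<forall>x\<in>set w. x \<ge> 1"
  proof
    fix x assume "x \<in> set w"
    then obtain j where j: "j < length w" "w ! j = x" by (auto simp: in_set_conv_nth)
    then have "ks ! Suc j \<ge> 1" using assms(3) ks by auto
    then show "x \<ge> 1" using j ks by simp
  qed
  show ?thesis
  proof (cases "k = 2")
    case True
    then show ?thesis using case_2[OF pw] ks by simp
  next
    case False
    then have "k \<ge> 3" using k by simp
    then show ?thesis using case_ge3[OF _ pw] ks by simp
  qed
qed

end
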